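(* Let $G$ be a graph on $n\ge 3$ vertices, and let $k$ be the maximum number of vertices of an induced subgraph of $G$ that is a threshold graph. Then $\rho_T(G)\le n-k+1$.
   Context: Graphs are finite and simple. A graph $G=(V,E)$ is a threshold graph if there exist weights $w:V\to\mathbb{R}$ and a real number $s$ such that for all distinct $i,j\in V$: $w(i)+w(j)\ge s$ iff $ij\in E$. For $u,v\in(\mathbb{R}\cup\{\infty\})^k$ the min-plus tropical dot product is $u\odot v=\min_i(u_i+v_i)$. A min-plus $k$-tropical dot product representation of $G$ is a map $f:V\to(\mathbb{R}\cup\{\infty\})^k$ with a threshold $t>0$ such that for all distinct $x,y\in V$: $xy\in E$ iff $f(x)\odot f(y)\ge t$. $\rho_T(G)$ is the least $k\ge 1$ for which such a representation exists. *)

theory Defs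
  imports "HOL-Library.Extended_Real"
begin

definition simple_graph :: "'a set \<Rightarrow> ('a \<Rightarrow> 'a \<Rightarrow> bool) \<Rightarrow> bool" where
  "simple_graph V E \<longleftrightarrow> finite V \<and> (\<forall>x\<in>V. \<forall>y\<in>V. E x y \<longleftrightarrow> E y x) \<and> (\<forall>x\<in>V. \<not> E x x)"

definition threshold_graph :: "'a set \<Rightarrow> ('a \<Rightarrow> 'a \<Rightarrow> bool) \<Rightarrow> bool" where
  "threshold_graph S E \<longleftrightarrow>
     (\<exists>(w :: 'a \<Rightarrow> real) (s :: real). \<forall>i\<in>S. \<forall>j\<in>S. i \<noteq> j \<longrightarrow> (w i + w j \<ge> s \<longleftrightarrow> E i j))"

text \<open>Vectors in (R \<union> {\<infinity>})^k are functions nat \<Rightarrow> ereal, whose entries at indices i < k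
  are never -\<infinity>.  The min-plus tropical dot product of two such vectors.\<close>

definition trop_vec :: "nat \<Rightarrow> (nat \<Rightarrow> ereal) \<Rightarrow> bool" where
  "trop_vec k u \<longleftrightarrow> (\<forall>i<k. u i \<noteq> -\<infinity>)"

definition trop_dot :: "nat \<Rightarrow> (nat \<Rightarrow> ereal) \<Rightarrow> (nat \<Rightarrow> ereal) \<Rightarrow> ereal" where
  "trop_dot k u v = Min ((\<lambda>i. u i + v i) ` {..<k})"

definition min_plus_rep :: "'a set \<Rightarrow> ('a \<Rightarrow> 'a \<Rightarrow> bool) \<Rightarrow> nat \<Rightarrow> bool" where
  "min_plus_rep V E k \<longleftrightarrow>
     (\<exists>(f :: 'a \<Rightarrow> nat \<Rightarrow> ereal) (t :: real). t > 0 \<and> (\<forall>x\<in>V. trop_vec k (f x)) \<and>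
        (\<forall>x\<in>V. \<forall>y\<in>V. x \<noteq> y \<longrightarrow> (E x y \<longleftrightarrow> trop_dot k (f x) (f y) \<ge> ereal t)))"

definition rho_T :: "'a set \<Rightarrow> ('a \<Rightarrow> 'a \<Rightarrow> bool) \<Rightarrow> nat" where
  "rho_T V E = (LEAST k. k \<ge> 1 \<and> min_plus_rep V E k)"

definition max_threshold_induced :: "'a set \<Rightarrow> ('a \<Rightarrow> 'a \<Rightarrow> bool) \<Rightarrow> nat" where
  "max_threshold_induced V E = Max {card S | S. S \<subseteq> V \<and> threshold_graph S E}"

end

theory Submission
  imports Defs
begin

lemma dot_ge1:
  assumes "k > 0"
  shows "(trop_dot k u v \<ge> ereal 1) \<longleftrightarrow> (\<forall>i<k. u i + v i \<ge> 1)"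
  unfolding trop_dot_def using assms by (subst Min_ge_iff) (auto simp: one_ereal_def)

theorem mainTheorem11:
  fixes V :: "'a set" and E :: "'a \<Rightarrow> 'a \<Rightarrow> bool"
  assumes "simple_graph V E" and "card V \<ge> 3"
  shows "rho_T V E \<le> card V - max_threshold_induced V E + 1"
proof -
  have fin: "finite V" and sym: "\<And>x y. x \<in> V \<Longrightarrow> y \<in> V \<Longrightarrow> E x y \<longleftrightarrow> E y x"
    using assms(1) unfolding simple_graph_def by auto
  let ?C = "{card S | S. S \<subseteq> V \<and> threshold_graph S E}"
  have finC: "finite ?C"
  proof -
    have "?C \<subseteq> card ` Pow V" by auto
    thus ?thesis using fin by (meson finite_Pow_iff finite_imageI finite_subset)
  qed
  have "card {} \<in> ?C" unfolding threshold_graph_def by (intro CollectI exI[of _ "{}"]) auto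
  hence "max_threshold_induced V E \<in> ?C" unfolding max_threshold_induced_def
    using finC by (intro Max_in) auto
  then obtain S where S: "S \<subseteq> V" "threshold_graph S E" "card S = max_threshold_induced V E"
    by auto
  obtain w :: "'a \<Rightarrow> real" and s :: real where ws: "\<And>i j. i \<in> S \<Longrightarrow> j \<in> S \<Longrightarrow> i \<noteq> j \<Longrightarrow> (w i + w j \<ge> s \<longleftrightarrow> E i j)"
    using S(2) unfolding threshold_graph_def by (auto simp: Ball_def)
  define R where "R = V - S"
  define m where "m = card R"
  have finR: "finite R" using fin R_def by auto
  obtain b where b: "bij_betw b {0..<m} R" using ex_bij_betw_nat_finite[OF finR] m_def by auto
  define a where "a x = w x - s/2 + 1/2" for x
  define f where "f v i = (if i = 0 then (if v \<in> S then ereal (a v) else \<infinity>)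
      else (if v = b (i-1) then 0 else if E v (b (i-1)) then 1 else ereal (1/2)))" for v i
  have bR: "b (i-1) \<in> R" if "1 \<le> i" "i < m+1" for i
    using b that bij_betwE by fastforce
  have fninf: "f x i \<noteq> -\<infinity>" for x i unfolding f_def by auto
  have A: "f x i + f y i \<ge> 1" if "1 \<le> i" "b (i-1) \<noteq> x" "b (i-1) \<noteq> y" for x y i
  proof -
    have "f x i \<ge> ereal (1/2)" "f y i \<ge> ereal (1/2)" using that unfolding f_def by auto
    hence "ereal (1/2) + ereal (1/2) \<le> f x i + f y i" by (rule add_mono)
    thus ?thesis by (simp add: one_ereal_def)
  qed
  have B: "f x i + f y i = (if E y x then 1 else ereal (1/2))" if "1 \<le> i" "b (i-1) = x" "x \<noteq> y" for x y i
    using that unfolding f_def by auto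
  have key1: "E x y \<longleftrightarrow> (\<forall>i<m+1. f x i + f y i \<ge> 1)"
    if xy: "x \<in> V" "y \<in> V" "x \<noteq> y" "x \<notin> S" for x y
  proof
    assume Exy: "E x y"
    show "\<forall>i<m+1. f x i + f y i \<ge> 1"
    proof (intro allI impI)
      fix i assume i: "i < m+1"
      show "f x i + f y i \<ge> 1"
      proof (cases "i = 0")
        case True
        thus ?thesis using xy fninf[of y 0] unfolding f_def by auto
      next
        case False
        hence i1: "1 \<le> i" by auto
        consider "b (i-1) = x" | "b (i-1) = y" | "b (i-1) \<noteq> x" "b (i-1) \<noteq> y" by blast
        thus ?thesis
        proof cases
          case 1 have "E y x" using Exy sym[OF xy(1) xy(2)] by blast
          thus ?thesis using B[OF i1 1 xy(3)] by simp
        next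
          case 2 have "f y i + f x i = 1" using B[OF i1 2] Exy xy by auto
          thus ?thesis by (simp add: add.commute)
        next
          case 3 thus ?thesis using A i1 by auto
        qed
      qed
    qed
  next
    assume H: "\<forall>i<m+1. f x i + f y i \<ge> 1"
    have "x \<in> R" using xy R_def by auto
    then obtain j where j: "j < m" "b j = x" using bij_betw_imp_surj_on[OF b] by (metis atLeastLessThan_iff imageE)
    have "f x (j+1) + f y (j+1) \<ge> 1" using H j by auto
    moreover have "f x (j+1) + f y (j+1) = (if E y x then 1 else ereal (1/2))"
      using B[of "j+1" x y] j xy by auto
    ultimately have "E y x" by (auto split: if_splits simp: one_ereal_def)
    thus "E x y" using sym[OF xy(1) xy(2)] by blast
  qed
  have key: "E x y \<longleftrightarrow> (\<forall>i<m+1. f x i + f y i \<ge> 1)"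
    if xy: "x \<in> V" "y \<in> V" "x \<noteq> y" for x y
  proof (cases "x \<in> S")
    case xS: True
    show ?thesis
    proof (cases "y \<in> S")
      case yS: True
      have other: "f x i + f y i \<ge> 1" if "1 \<le> i" "i < m+1" for i
      proof -
        have "b (i-1) \<in> R" using bR that by auto
        hence "b (i-1) \<noteq> x" "b (i-1) \<noteq> y" using xS yS R_def by auto
        thus ?thesis using A that by auto
      qed
      have "(\<forall>i<m+1. f x i + f y i \<ge> 1) \<longleftrightarrow> f x 0 + f y 0 \<ge> 1"
      proof
        assume "\<forall>i<m+1. f x i + f y i \<ge> 1" thus "f x 0 + f y 0 \<ge> 1" by auto
      next
        assume h: "f x 0 + f y 0 \<ge> 1"
        show "\<forall>i<m+1. f x i + f y i \<ge> 1"
        proof (intro allI impI)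
          fix i assume "i < m+1"
          thus "f x i + f y i \<ge> 1" using h other[of i] by (cases "i = 0") auto
        qed
      qed
      also have "\<dots> \<longleftrightarrow> a x + a y \<ge> 1" unfolding f_def using xS yS by (simp add: one_ereal_def)
      also have "\<dots> \<longleftrightarrow> w x + w y \<ge> s" unfolding a_def by auto
      also have "\<dots> \<longleftrightarrow> E x y" using ws xS yS xy by auto
      finally show ?thesis by simp
    next
      case yS: False
      have "E y x \<longleftrightarrow> (\<forall>i<m+1. f y i + f x i \<ge> 1)" using key1 xy yS by auto
      thus ?thesis using sym[OF xy(1) xy(2)] by (simp add: add.commute)
    qed
  next
    case False thus ?thesis using key1 xy by auto
  qed
  have rep: "min_plus_rep V E (m+1)"
    unfolding min_plus_rep_def
  proof (intro exI[of _ f] exI[of _ 1] conjI ballI impI)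
    show "(0::real) < 1" by simp
    show "trop_vec (m+1) (f x)" for x unfolding trop_vec_def using fninf by auto
    fix x y assume "x \<in> V" "y \<in> V" "x \<noteq> y"
    thus "E x y = (ereal 1 \<le> trop_dot (m + 1) (f x) (f y))"
      using key dot_ge1[of "m+1" "f x" "f y"] by auto
  qed
  have "rho_T V E \<le> m+1" unfolding rho_T_def using rep by (intro Least_le) simp
  moreover have "m = card V - card S" unfolding m_def R_def using S(1) fin
    by (simp add: card_Diff_subset finite_subset)
  ultimately show ?thesis using S(3) by simp
qed

end
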